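(* Consider $n$ agents $\mathcal{V}=\{1,\dots,n\}$ with Lagrangian dynamics $M_i(q_i)\ddot q_i+C_i(q_i,\dot q_i)\dot q_i=\tau_i$, $q_i\in\mathbb{R}^m$, with $M_i(q_i)$ symmetric positive definite. Let $\mathcal{X}_1,\dots,\mathcal{X}_n\subseteq\mathbb{R}^m$ be closed convex sets with $\mathcal{X}_0=\bigcap_{i}\mathcal{X}_i$ nonempty and bounded. Let $\sigma:[t_0,\infty)\to\mathcal{P}$ be a piecewise constant switching signal taking values in a finite set $\mathcal{P}$ of undirected graphs on $\mathcal{V}$, with switching times $t_0<t_1<\dots$ satisfying $\inf_l(t_{l+1}-t_l)\ge\tau_d>0$; let $\mathcal{N}_i(\sigma(t))$ be the neighbor set of $i$ in $\mathcal{G}_{\sigma(t)}=(\mathcal{V},\mathcal{E}_{\sigma(t)})$. Let $a_{ij}(t)=a_{ji}(t)$ be continuous weights with $a_*\le a_{ij}(t)\le a^*$ for all $i,j$, $t\ge0$, for constants $a_*,a^*>0$. Apply the control $$\tau_i=C_i(q_i,\dot q_i)\dot q_i-kM_i(q_i)\dot q_i-M_i(q_i)(q_i-P_{\mathcal{X}_i}(q_i))-M_i(q_i)\sum_{j\in\mathcal{N}_i(\sigma(t))}a_{ij}(t)(q_i-q_j).$$ Suppose the graph is uniformly jointly connected: there is $T>0$ such that for every $t\ge t_0$ the union graph $(\mathcal{V},\bigcup_{s\in[t,t+T)}\mathcal{E}_{\sigma(s)})$ is connected. Then for all sufficiently large $k>0$, every solution satisfies $\lim_{t\to\infty}\|q_i(t)\|_{\mathcal{X}_0}=0$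 for all $i$, $\lim_{t\to\infty}(q_i(t)-q_j(t))=0$ for all $i,j$, and $\lim_{t\to\infty}\dot q_i(t)=0$ for all $i$.
   Context: $\|\cdot\|$ is the Euclidean norm, $\|x\|_{\mathcal{S}}=\inf_{y\in\mathcal{S}}\|x-y\|$, and $P_{\mathcal{S}}(x)$ is the Euclidean projection of $x$ onto a closed convex set $\mathcal{S}$. *)

theory Defs
  imports "HOL-Analysis.Analysis"
begin

definition undirected_graph_on :: "nat set \<Rightarrow> (nat \<times> nat) set \<Rightarrow> bool" where
  "undirected_graph_on V E \<longleftrightarrow> E \<subseteq> V \<times> V \<and> sym E \<and> irrefl E"

definition graph_connected :: "nat set \<Rightarrow> (nat \<times> nat) set \<Rightarrow> bool" where
  "graph_connected V E \<longleftrightarrow> (\<forall>i\<in>V. \<forall>j\<in>V. (i, j) \<in> (E \<inter> (V \<times> V))\<^sup>*)"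

definition neighbors :: "(nat \<times> nat) set \<Rightarrow> nat \<Rightarrow> nat set" where
  "neighbors E i = {j. (i, j) \<in> E}"

definition spd :: "real^'m^'m \<Rightarrow> bool" where
  "spd A \<longleftrightarrow> transpose A = A \<and> (\<forall>v. v \<noteq> 0 \<longrightarrow> v \<bullet> (A *v v) > 0)"

end

theory Submission
  imports Defs
begin


lemma decr_finite_exc:
  fixes f :: "real \<Rightarrow> real"
  assumes "finite S" "a \<le> b" "continuous_on {a..b} f"
   "\<And>x. a < x \<Longrightarrow> x < b \<Longrightarrow> x \<notin> S \<Longrightarrow> \<exists>y. (f has_real_derivative y) (at x) \<and> y \<le> 0"
  shows "f b \<le> f a"
  using assms(2-4)
proof (induction "card (S \<inter> {a<..<b})" arbitrary: a b rule: less_induct)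
  case less
  show ?case
  proof (cases "S \<inter> {a<..<b} = {}")
    case True
    show ?thesis
    proof (rule DERIV_nonpos_imp_decreasing_open[OF less.prems(1) _ less.prems(2)])
      fix x assume x: "a < x" "x < b"
      hence "x \<notin> S" using True by auto
      thus "\<exists>y. (f has_real_derivative y) (at x) \<and> y \<le> 0" using less.prems(3) x by simp
    qed
  next
    case False
    then obtain c where c: "c \<in> S" "a < c" "c < b" by auto
    have fin: "finite (S \<inter> {a<..<b})" using assms(1) by auto
    have c1: "card (S \<inter> {a<..<c}) < card (S \<inter> {a<..<b})"
      by (rule psubset_card_mono[OF fin]) (use c in auto)
    have c2: "card (S \<inter> {c<..<b}) < card (S \<inter> {a<..<b})"
      by (rule psubset_card_mono[OF fin]) (use c in auto)
    have "f c \<le> f a"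
    proof (rule less.hyps[OF c1])
      show "a \<le> c" using c by simp
      show "continuous_on {a..c} f" by (rule continuous_on_subset[OF less.prems(2)]) (use c in auto)
      fix x assume "a < x" "x < c" "x \<notin> S"
      thus "\<exists>y. (f has_real_derivative y) (at x) \<and> y \<le> 0" by (intro less.prems(3)) (use c in auto)
    qed
    moreover have "f b \<le> f c"
    proof (rule less.hyps[OF c2])
      show "c \<le> b" using c by simp
      show "continuous_on {c..b} f" by (rule continuous_on_subset[OF less.prems(2)]) (use c in auto)
      fix x assume "c < x" "x < b" "x \<notin> S"
      thus "\<exists>y. (f has_real_derivative y) (at x) \<and> y \<le> 0" by (intro less.prems(3)) (use c in auto)
    qed
    ultimately show ?thesis by simp
  qed
qed

lemma lip_finite_exc:
  fixes g :: "real \<Rightarrow> 'a::real_inner"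
  assumes "finite S" "a \<le> b" "continuous_on {a..b} g" "0 \<le> B"
    "\<And>x. a<x \<Longrightarrow> x<b \<Longrightarrow> x\<notin>S \<Longrightarrow> \<exists>g'. (g has_vector_derivative g') (at x) \<and> norm g' \<le> B"
  shows "norm (g b - g a) \<le> B * (b - a)"
proof -
  define u where "u = g b - g a"
  define f where "f x = inner (g x) u - B * norm u * x" for x
  have "f b \<le> f a"
  proof (rule decr_finite_exc[OF assms(1,2)])
    show "continuous_on {a..b} f" unfolding f_def
      by (intro continuous_intros assms(3))
    fix x assume x: "a < x" "x < b" "x \<notin> S"
    then obtain g' where g': "(g has_vector_derivative g') (at x)" "norm g' \<le> B" using assms(5) by blast
    have h1: "((\<lambda>x. inner (g x) u) has_real_derivative inner g' u) (at x)"
      using bounded_bilinear.has_vector_derivative[OF bounded_bilinear_inner g'(1) has_vector_derivative_const[of u]]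
      by (simp add: has_real_derivative_iff_has_vector_derivative)
    have h2: "((\<lambda>x. B * norm u * x) has_real_derivative B * norm u) (at x)"
      using DERIV_cmult[OF DERIV_ident, of "B * norm u"] by simp
    have "(f has_real_derivative (inner g' u - B * norm u)) (at x)"
      unfolding f_def by (rule DERIV_diff[OF h1 h2])
    moreover have "inner g' u \<le> B * norm u"
    proof -
      have "inner g' u \<le> norm g' * norm u" by (rule norm_cauchy_schwarz)
      also have "\<dots> \<le> B * norm u" by (rule mult_right_mono[OF g'(2) norm_ge_zero])
      finally show ?thesis .
    qed
    ultimately show "\<exists>y. (f has_real_derivative y) (at x) \<and> y \<le> 0" by auto
  qed
  hence "inner (g b) u - inner (g a) u \<le> B * norm u * (b - a)"
    unfolding f_def by (simp add: right_diff_distrib)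
  moreover have "inner u u = inner (g b) u - inner (g a) u" by (simp add: u_def inner_diff_left)
  ultimately have uu: "norm u * norm u \<le> norm u * (B * (b - a))"
    by (simp add: power2_norm_eq_inner[symmetric] power2_eq_square mult.assoc mult.left_commute)
  show ?thesis
  proof (cases "norm u = 0")
    case True thus ?thesis using assms(2,4) by (simp add: u_def)
  next
    case False
    hence "norm u > 0" by simp
    thus ?thesis using uu unfolding u_def by (simp add: mult_le_cancel_left_pos)
  qed
qed



lemma nbr_sum:
  assumes "E \<subseteq> V \<times> V" "finite V"
  shows "(\<Sum>i\<in>V. \<Sum>j\<in>neighbors E i. h i j) = (\<Sum>p\<in>E. h (fst p) (snd p))"
proof -
  have "Sigma V (neighbors E) = E" using assms(1) by (auto simp: neighbors_def)
  moreover have "finite (neighbors E i)" for i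
    using assms by (auto simp: neighbors_def intro: finite_subset[of _ V])
  ultimately show ?thesis using assms(2)
    by (simp add: sum.Sigma case_prod_beta)
qed

lemma sym_sum:
  assumes "sym E"
  shows "(\<Sum>p\<in>E. h (fst p) (snd p)) = (\<Sum>p\<in>E. h (snd p) (fst p))"
proof -
  have b: "bij_betw prod.swap E E"
    by (rule bij_betwI[where g=prod.swap]) (use assms in \<open>auto simp: sym_def\<close>)
  show ?thesis using sum.reindex_bij_betw[OF b, of "\<lambda>p. h (fst p) (snd p)"] by simp
qed

lemma young: "2 * x * y \<le> l * x^2 + y^2 / l" if "l > 0" for x y l :: real
proof -
  have "0 \<le> (l * x - y)^2 / l" using that by simp
  thus ?thesis using that by (simp add: power2_eq_square field_simps)
qed

lemma agent_ineq:
  fixes v e g :: "'a::real_inner" and d :: "nat \<Rightarrow> 'a"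
  assumes fin: "finite N" "card N \<le> n" and aa: "\<And>j. j \<in> N \<Longrightarrow> 0 \<le> a j \<and> a j \<le> ah"
    and al: "al > 0" and ahp: "ah > 0" and eg: "inner e g \<ge> inner g g"
    and qdd: "qdd = - (k *\<^sub>R v) - g - (\<Sum>j\<in>N. a j *\<^sub>R d j)"
  shows "2 * inner v qdd + 2 * (inner qdd e + inner v v) + k * (2 * inner e v)
    \<le> - (2*k - 4 - real n * (2*ah^2/al)) * (norm v)^2 - 3/2 * (norm g)^2
       + al/2 * (\<Sum>j\<in>N. (norm (d j))^2) - 2 * (\<Sum>j\<in>N. a j * inner e (d j))"
proof -
  define l where "l = 2*ah^2/al"
  have L: "- 2 * inner v (\<Sum>j\<in>N. a j *\<^sub>R d j) \<le> real n * l * (norm v)^2 + al/2 * (\<Sum>j\<in>N. (norm (d j))^2)"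
  proof (cases "N = {}")
    case True thus ?thesis using al by (simp add: l_def)
  next
    case False
    have lp: "l > 0" using al ahp by (simp add: l_def)
    have "- 2 * inner v (\<Sum>j\<in>N. a j *\<^sub>R d j) = (\<Sum>j\<in>N. - 2 * a j * inner v (d j))"
      by (simp add: inner_sum_right sum_distrib_left mult.assoc)
    also have "\<dots> \<le> (\<Sum>j\<in>N. l * (norm v)^2 + al/2 * (norm (d j))^2)"
    proof (rule sum_mono)
      fix j assume j: "j \<in> N"
      have cs: "- inner v (d j) \<le> norm v * norm (d j)"
        using Cauchy_Schwarz_ineq2[of v "d j"] by linarith
      have "- 2 * a j * inner v (d j) = (2 * a j) * (- inner v (d j))" by simp
      also have "\<dots> \<le> (2 * a j) * (norm v * norm (d j))"
        by (rule mult_left_mono[OF cs]) (use aa[OF j] in simp)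
      also have "\<dots> \<le> 2 * (norm v) * (ah * norm (d j))"
      proof -
        have "a j * (norm v * norm (d j)) \<le> ah * (norm v * norm (d j))"
          using aa[OF j] by (intro mult_right_mono) auto
        thus ?thesis by (simp add: algebra_simps)
      qed
      also have "\<dots> \<le> l * (norm v)^2 + (ah * norm (d j))^2 / l"
        by (rule young[OF lp])
      also have "(ah * norm (d j))^2 / l = al/2 * (norm (d j))^2"
        using ahp al by (simp add: l_def power_mult_distrib field_simps)
      finally show "- 2 * a j * inner v (d j) \<le> l * (norm v)^2 + al/2 * (norm (d j))^2" by simp
    qed
    also have "\<dots> = real (card N) * l * (norm v)^2 + al/2 * (\<Sum>j\<in>N. (norm (d j))^2)"
      by (simp add: sum.distrib sum_distrib_left)
    also have "\<dots> \<le> real n * l * (norm v)^2 + al/2 * (\<Sum>j\<in>N. (norm (d j))^2)"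
      using fin lp by (simp add: mult_right_mono)
    finally show ?thesis .
  qed
  have G: "- 2 * inner v g \<le> 2 * (norm v)^2 + 1/2 * (norm g)^2"
  proof -
    have "- 2 * inner v g \<le> 2 * (norm v * norm g)"
      using Cauchy_Schwarz_ineq2[of v g] by linarith
    also have "\<dots> = 2 * (norm v) * (norm g)" by simp
    also have "\<dots> \<le> 2 * (norm v)^2 + (norm g)^2 / 2" using young[of 2 "norm v" "norm g"] by simp
    finally show ?thesis by simp
  qed
  have EL: "inner e (\<Sum>j\<in>N. a j *\<^sub>R d j) = (\<Sum>j\<in>N. a j * inner e (d j))"
    by (simp add: inner_sum_right)
  have ng: "(norm g)^2 = inner g g" "(norm v)^2 = inner v v" by (simp_all add: power2_norm_eq_inner)
  define Lv where "Lv = (\<Sum>j\<in>N. a j *\<^sub>R d j)"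
  have eq: "2 * inner v qdd + 2 * (inner qdd e + inner v v) + k * (2 * inner e v)
     = -2*(k-1) * inner v v - 2 * inner v g - 2 * inner v Lv - 2 * inner e g - 2 * inner e Lv"
    unfolding qdd Lv_def[symmetric]
    by (simp add: inner_diff_left inner_diff_right inner_commute algebra_simps)
  show ?thesis
    unfolding eq l_def[symmetric] Lv_def
    using L G eg EL ng by (simp add: algebra_simps)
qed



locale sys =
  fixes n :: nat and X :: "nat \<Rightarrow> (real^'m) set" and \<sigma> :: "real \<Rightarrow> (nat \<times> nat) set"
    and t0 \<tau>d T a_lo a_hi k :: real and tsw :: "nat \<Rightarrow> real" and a :: "nat \<Rightarrow> nat \<Rightarrow> real \<Rightarrow> real"
    and q q' q'' :: "nat \<Rightarrow> real \<Rightarrow> real^'m" and x0 :: "real^'m"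
  assumes X_closed: "\<And>i. i \<in> {1..n} \<Longrightarrow> closed (X i)"
    and X_convex: "\<And>i. i \<in> {1..n} \<Longrightarrow> convex (X i)"
    and x0_in: "\<And>i. i \<in> {1..n} \<Longrightarrow> x0 \<in> X i"
    and graphs: "\<And>t. t \<ge> t0 \<Longrightarrow> undirected_graph_on {1..n} (\<sigma> t)"
    and \<tau>d_pos: "\<tau>d > 0"
    and tsw_0: "tsw 0 = t0"
    and tsw_dwell: "\<And>l. tsw (Suc l) - tsw l \<ge> \<tau>d"
    and \<sigma>_pc: "\<And>l t. tsw l \<le> t \<Longrightarrow> t < tsw (Suc l) \<Longrightarrow> \<sigma> t = \<sigma> (tsw l)"
    and a_sym: "\<And>i j t. a i j t = a j i t"
    and a_bounds: "\<And>i j t. i \<in> {1..n} \<Longrightarrow> j \<in> {1..n} \<Longrightarrow> t \<ge> 0 \<Longrightarrow>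
                     a_lo \<le> a i j t \<and> a i j t \<le> a_hi"
    and a_lo_pos: "a_lo > 0" and a_hi_pos: "a_hi > 0"
    and T_pos: "T > 0"
    and jc: "\<And>t. t \<ge> t0 \<Longrightarrow> graph_connected {1..n} (\<Union>s\<in>{t..<t+T}. \<sigma> s)"
    and k_big: "k > 3 + real n * a_hi^2 / a_lo"
    and qd: "\<And>i t. i \<in> {1..n} \<Longrightarrow> t \<ge> t0 \<Longrightarrow> (q i has_vector_derivative q' i t) (at t within {t0..})"
    and q'c: "\<And>i. i \<in> {1..n} \<Longrightarrow> continuous_on {t0..} (q' i)"
    and ode: "\<And>i t. i \<in> {1..n} \<Longrightarrow> t > t0 \<Longrightarrow> t \<notin> range tsw \<Longrightarrow>
        (q' i has_vector_derivative q'' i t) (at t) \<and>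
        q'' i t = - (k *\<^sub>R q' i t) - (q i t - closest_point (X i) (q i t))
                  - (\<Sum>j\<in>neighbors (\<sigma> t) i. a i j t *\<^sub>R (q i t - q j t))"
begin

abbreviation "V \<equiv> {1..n}"
definition "t1 = max t0 0"
definition "cp i x = closest_point (X i) x"
definition "Vf t = (\<Sum>i\<in>V. (norm (q' i t))^2 + 2 * inner (q' i t) (q i t - x0) + k * (norm (q i t - x0))^2)"
definition "Wf t = (\<Sum>i\<in>V. (norm (q' i t))^2) + (\<Sum>i\<in>V. (norm (q i t - cp i (q i t)))^2)
     + a_lo/2 * (\<Sum>p\<in>\<sigma> t. (norm (q (fst p) t - q (snd p) t))^2)"

lemma k_pos: "k > 3"
proof -
  have "real n * a_hi^2 / a_lo \<ge> 0" using a_lo_pos by simp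
  thus ?thesis using k_big by linarith
qed

lemma E_sub: "t \<ge> t0 \<Longrightarrow> \<sigma> t \<subseteq> V \<times> V"
  using graphs by (auto simp: undirected_graph_on_def)
lemma E_sym: "t \<ge> t0 \<Longrightarrow> sym (\<sigma> t)"
  using graphs by (auto simp: undirected_graph_on_def)
lemma E_fin: "t \<ge> t0 \<Longrightarrow> finite (\<sigma> t)"
  by (rule finite_subset[OF E_sub]) auto
lemma nbr_sub: "t \<ge> t0 \<Longrightarrow> neighbors (\<sigma> t) i \<subseteq> V"
  using E_sub by (auto simp: neighbors_def)

lemma qd_at: "i \<in> V \<Longrightarrow> t > t0 \<Longrightarrow> (q i has_vector_derivative q' i t) (at t)"
proof -
  assume i: "i \<in> V" and t: "t > t0"
  have sub: "{t0<..} \<subseteq> {t0..}" by (simp add: subset_eq)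
  have h: "(q i has_vector_derivative q' i t) (at t within {t0<..})"
    by (rule has_vector_derivative_within_subset[OF qd[OF i less_imp_le[OF t]] sub])
  have tin: "t \<in> {t0<..}" using t by simp
  show ?thesis using h has_vector_derivative_within_open[OF tin open_greaterThan] by (rule iffD1[rotated])
qed

lemma qc: "i \<in> V \<Longrightarrow> continuous_on {t0..} (q i)"
  unfolding continuous_on_eq_continuous_within
proof
  fix t assume i: "i \<in> V" and t: "t \<in> {t0..}"
  hence "t \<ge> t0" by simp
  thus "continuous (at t within {t0..}) (q i)"
    by (rule has_vector_derivative_continuous[OF qd[OF i]])
qed

lemma eg_ineq: "i \<in> V \<Longrightarrow> inner (x - x0) (x - cp i x) \<ge> inner (x - cp i x) (x - cp i x)"
proof -
  assume i: "i \<in> V"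
  define p where "p = cp i x"
  have ne: "X i \<noteq> {}" using x0_in[OF i] by blast
  have 1: "inner (x - p) (x0 - p) \<le> 0"
    unfolding p_def cp_def
    using any_closest_point_dot[OF X_convex[OF i] X_closed[OF i] closest_point_in_set[OF X_closed[OF i] ne] x0_in[OF i] closest_point_exists(2)[OF X_closed[OF i] ne]] .
  have 2: "inner (x - x0) (x - p) = inner (x - p) (x - p) + inner (p - x0) (x - p)"
    by (simp add: inner_diff_left)
  have 3: "inner (p - x0) (x - p) = - inner (x - p) (x0 - p)"
  proof -
    have "p - x0 = - (x0 - p)" by simp
    hence "inner (p - x0) (x - p) = - inner (x0 - p) (x - p)" by (simp only: inner_minus_left)
    thus ?thesis by (simp only: inner_commute)
  qed
  show ?thesis using 1 2 3 unfolding p_def[symmetric] by linarith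
qed

lemma Vf_deriv:
  assumes t: "t > t1" "t \<notin> range tsw"
  shows "\<exists>D. (Vf has_real_derivative D) (at t) \<and> D \<le> - Wf t"
proof -
  have tt0: "t > t0" "t \<ge> 0" using t by (auto simp: t1_def)
  define D where "D i = 2 * inner (q' i t) (q'' i t) + 2 * (inner (q'' i t) (q i t - x0) + inner (q' i t) (q' i t))
     + k * (2 * inner (q i t - x0) (q' i t))" for i
  have dv: "((\<lambda>s. (norm (q' i s))^2 + 2 * inner (q' i s) (q i s - x0) + k * (norm (q i s - x0))^2)
       has_real_derivative D i) (at t)" if i: "i \<in> V" for i
  proof -
    have d1: "(q' i has_vector_derivative q'' i t) (at t)" using ode[OF i tt0(1) t(2)] by blast
    have d2: "((\<lambda>s. q i s - x0) has_vector_derivative q' i t) (at t)"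
      using qd_at[OF i tt0(1)] by (auto intro!: derivative_eq_intros)
    have a1: "((\<lambda>s. inner (q' i s) (q' i s)) has_vector_derivative (inner (q' i t) (q'' i t) + inner (q'' i t) (q' i t))) (at t)"
      by (rule bounded_bilinear.has_vector_derivative[OF bounded_bilinear_inner d1 d1])
    have a2: "((\<lambda>s. inner (q' i s) (q i s - x0)) has_vector_derivative (inner (q' i t) (q' i t) + inner (q'' i t) (q i t - x0))) (at t)"
      by (rule bounded_bilinear.has_vector_derivative[OF bounded_bilinear_inner d1 d2])
    have a3: "((\<lambda>s. inner (q i s - x0) (q i s - x0)) has_vector_derivative (inner (q i t - x0) (q' i t) + inner (q' i t) (q i t - x0))) (at t)"
      by (rule bounded_bilinear.has_vector_derivative[OF bounded_bilinear_inner d2 d2])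
    have "((\<lambda>s. inner (q' i s) (q' i s) + 2 * inner (q' i s) (q i s - x0) + k * inner (q i s - x0) (q i s - x0))
       has_real_derivative ((inner (q' i t) (q'' i t) + inner (q'' i t) (q' i t)) + 2 * (inner (q' i t) (q' i t) + inner (q'' i t) (q i t - x0))
          + k * (inner (q i t - x0) (q' i t) + inner (q' i t) (q i t - x0)))) (at t)"
      using a1 a2 a3 unfolding has_real_derivative_iff_has_vector_derivative[symmetric]
      by (intro DERIV_add DERIV_cmult)
    moreover have "((inner (q' i t) (q'' i t) + inner (q'' i t) (q' i t)) + 2 * (inner (q' i t) (q' i t) + inner (q'' i t) (q i t - x0))
          + k * (inner (q i t - x0) (q' i t) + inner (q' i t) (q i t - x0))) = D i"
      unfolding D_def inner_commute[of "q'' i t" "q' i t"] inner_commute[of "q' i t" "q i t - x0"] by (simp add: algebra_simps)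
    ultimately have "((\<lambda>s. inner (q' i s) (q' i s) + 2 * inner (q' i s) (q i s - x0) + k * inner (q i s - x0) (q i s - x0))
       has_real_derivative D i) (at t)" by simp
    thus ?thesis by (simp add: power2_norm_eq_inner)
  qed
  have "(Vf has_real_derivative (\<Sum>i\<in>V. D i)) (at t)"
    unfolding Vf_def[abs_def] by (rule DERIV_sum) (use dv in auto)
  moreover have "(\<Sum>i\<in>V. D i) \<le> - Wf t"
  proof -
    define c where "c = 2*k - 4 - real n * (2*a_hi^2/a_lo)"
    have c1: "c \<ge> 1" using k_big a_lo_pos unfolding c_def by (simp add: field_simps)
    define E where "E = \<sigma> t"
    have Esub: "E \<subseteq> V \<times> V" and Esym: "sym E" and Efin: "finite E"
      using E_sub E_sym E_fin tt0 unfolding E_def by auto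
    define h where "h i j = a i j t * inner (q i t - x0) (q i t - q j t)" for i j
    define dd where "dd i j = (norm (q i t - q j t))^2" for i j
    have Di: "D i \<le> - c * (norm (q' i t))^2 - 3/2 * (norm (q i t - cp i (q i t)))^2
       + a_lo/2 * (\<Sum>j\<in>neighbors E i. dd i j) - 2 * (\<Sum>j\<in>neighbors E i. h i j)" if i: "i \<in> V" for i
    proof -
      have nb: "neighbors E i \<subseteq> V" using nbr_sub tt0 unfolding E_def by auto
      have "D i \<le> - c * (norm (q' i t))^2 - 3/2 * (norm (q i t - cp i (q i t)))^2
       + a_lo/2 * (\<Sum>j\<in>neighbors E i. (norm (q i t - q j t))^2) - 2 * (\<Sum>j\<in>neighbors E i. a i j t * inner (q i t - x0) (q i t - q j t))"
        unfolding D_def c_def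
      proof (rule agent_ineq[where N="neighbors E i" and n=n and a="\<lambda>j. a i j t" and ah=a_hi and al=a_lo and d="\<lambda>j. q i t - q j t"])
        show "finite (neighbors E i)" using nb finite_subset by blast
        show "card (neighbors E i) \<le> n" using card_mono[OF _ nb] by simp
        show "\<And>j. j \<in> neighbors E i \<Longrightarrow> 0 \<le> a i j t \<and> a i j t \<le> a_hi"
        proof -
          fix j assume "j \<in> neighbors E i"
          hence "j \<in> V" using nb by auto
          thus "0 \<le> a i j t \<and> a i j t \<le> a_hi" using a_bounds[OF i _ tt0(2), of j] a_lo_pos by auto
        qed
        show "0 < a_lo" "0 < a_hi" by (rule a_lo_pos, rule a_hi_pos)
        show "inner (q i t - cp i (q i t)) (q i t - cp i (q i t)) \<le> inner (q i t - x0) (q i t - cp i (q i t))"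
          by (rule eg_ineq[OF i])
        show "q'' i t = - (k *\<^sub>R q' i t) - (q i t - cp i (q i t)) - (\<Sum>j\<in>neighbors E i. a i j t *\<^sub>R (q i t - q j t))"
          using ode[OF i tt0(1) t(2)] unfolding cp_def E_def by blast
      qed
      thus ?thesis unfolding dd_def h_def .
    qed
    define Sv where "Sv = (\<Sum>i\<in>V. (norm (q' i t))^2)"
    define Sg where "Sg = (\<Sum>i\<in>V. (norm (q i t - cp i (q i t)))^2)"
    define SE where "SE = (\<Sum>p\<in>E. dd (fst p) (snd p))"
    define SH where "SH = (\<Sum>p\<in>E. h (fst p) (snd p))"
    have st1: "(\<Sum>i\<in>V. D i) \<le> (\<Sum>i\<in>V. - c * (norm (q' i t))^2 - 3/2 * (norm (q i t - cp i (q i t)))^2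
       + a_lo/2 * (\<Sum>j\<in>neighbors E i. dd i j) - 2 * (\<Sum>j\<in>neighbors E i. h i j))"
      by (rule sum_mono) (rule Di)
    have st2: "(\<Sum>i\<in>V. - c * (norm (q' i t))^2 - 3/2 * (norm (q i t - cp i (q i t)))^2
       + a_lo/2 * (\<Sum>j\<in>neighbors E i. dd i j) - 2 * (\<Sum>j\<in>neighbors E i. h i j))
       = - c * Sv - 3/2 * Sg
       + a_lo/2 * (\<Sum>i\<in>V. \<Sum>j\<in>neighbors E i. dd i j) - 2 * (\<Sum>i\<in>V. \<Sum>j\<in>neighbors E i. h i j)"
      unfolding Sv_def Sg_def by (simp add: sum.distrib sum_subtractf sum_distrib_left)
    have st3: "(\<Sum>i\<in>V. \<Sum>j\<in>neighbors E i. dd i j) = SE" "(\<Sum>i\<in>V. \<Sum>j\<in>neighbors E i. h i j) = SH"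
      unfolding SE_def SH_def nbr_sum[OF Esub finite_atLeastAtMost] by auto
    have st4: "2 * SH = (\<Sum>p\<in>E. a (fst p) (snd p) t * dd (fst p) (snd p))"
    proof -
      have "2 * SH = (\<Sum>p\<in>E. h (fst p) (snd p)) + (\<Sum>p\<in>E. h (snd p) (fst p))"
        using sym_sum[OF Esym, of h] unfolding SH_def by simp
      also have "\<dots> = (\<Sum>p\<in>E. a (fst p) (snd p) t * dd (fst p) (snd p))"
        unfolding sum.distrib[symmetric]
      proof (rule sum.cong[OF refl])
        fix p :: "nat \<times> nat"
        obtain i j where p: "p = (i, j)" by fastforce
        have "h i j + h j i = a i j t * (inner (q i t - x0) (q i t - q j t) + inner (q j t - x0) (q j t - q i t))"
          unfolding h_def a_sym[of j i] by (simp add: algebra_simps)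
        also have "inner (q i t - x0) (q i t - q j t) + inner (q j t - x0) (q j t - q i t) = dd i j"
          unfolding dd_def power2_norm_eq_inner by (simp add: inner_diff_left inner_diff_right inner_commute)
        finally show "h (fst p) (snd p) + h (snd p) (fst p) = a (fst p) (snd p) t * dd (fst p) (snd p)"
          using p by simp
      qed
      finally show ?thesis .
    qed
    have st5: "(\<Sum>p\<in>E. a (fst p) (snd p) t * dd (fst p) (snd p)) \<ge> a_lo * SE"
      unfolding sum_distrib_left SE_def
    proof (rule sum_mono)
      fix p assume p: "p \<in> E"
      have "a_lo \<le> a (fst p) (snd p) t" using a_bounds[of "fst p" "snd p" t] p Esub tt0 by auto
      thus "a_lo * dd (fst p) (snd p) \<le> a (fst p) (snd p) t * dd (fst p) (snd p)"
        by (rule mult_right_mono) (simp add: dd_def)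
    qed
    have s1: "Sv \<ge> 0" "Sg \<ge> 0" unfolding Sv_def Sg_def by (auto intro: sum_nonneg)
    have s2: "c * Sv \<ge> Sv"
      using mult_right_mono[OF c1 s1(1)] by simp
    have W: "Wf t = Sv + Sg + a_lo/2 * SE" unfolding Wf_def Sv_def Sg_def SE_def dd_def E_def ..
    have s3: "a_lo/2 * SE = (a_lo * SE)/2" by simp
    show ?thesis using st1 st2[unfolded st3] st4 st5 s1 s2 s3 unfolding W by linarith
  qed
  ultimately show ?thesis by blast
qed

end


context sys begin

lemma tsw_ge: "tsw l \<ge> t0 + real l * \<tau>d"
proof (induction l)
  case 0 thus ?case using tsw_0 by simp
next
  case (Suc l) thus ?case using tsw_dwell[of l] by (simp add: algebra_simps)
qed

lemma sw_fin: "finite (range tsw \<inter> {..b})"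
proof -
  have "{l. tsw l \<le> b} \<subseteq> {..nat \<lceil>(b - t0) / \<tau>d\<rceil>}"
  proof
    fix l assume "l \<in> {l. tsw l \<le> b}"
    hence "t0 + real l * \<tau>d \<le> b" using tsw_ge[of l] by simp
    hence "real l \<le> (b - t0) / \<tau>d" using \<tau>d_pos by (simp add: field_simps)
    hence "real l \<le> real (nat \<lceil>(b - t0) / \<tau>d\<rceil>)" by linarith
    thus "l \<in> {..nat \<lceil>(b - t0) / \<tau>d\<rceil>}" by simp
  qed
  hence "finite {l. tsw l \<le> b}" by (rule finite_subset) simp
  moreover have "range tsw \<inter> {..b} = tsw ` {l. tsw l \<le> b}" by auto
  ultimately show ?thesis by simp
qed

lemma Vf_cont: "continuous_on {t0..} Vf"
  unfolding Vf_def[abs_def]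
  by (intro continuous_intros qc q'c) auto

lemma Wf_nonneg: "Wf t \<ge> 0"
  unfolding Wf_def using a_lo_pos by (intro add_nonneg_nonneg mult_nonneg_nonneg sum_nonneg) auto

lemma V_drop:
  assumes s: "t1 \<le> s" "s \<le> s'"
    and W: "\<And>\<tau>. s < \<tau> \<Longrightarrow> \<tau> < s' \<Longrightarrow> \<tau> \<notin> range tsw \<Longrightarrow> Wf \<tau> \<ge> \<alpha>"
  shows "Vf s' \<le> Vf s - \<alpha> * (s' - s)"
proof -
  define f where "f \<tau> = Vf \<tau> + \<alpha> * \<tau>" for \<tau>
  have "f s' \<le> f s"
  proof (rule decr_finite_exc[OF sw_fin[of s'] s(2)])
    have "{s..s'} \<subseteq> {t0..}" using s by (auto simp: t1_def)
    thus "continuous_on {s..s'} f" unfolding f_def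
      by (intro continuous_intros continuous_on_subset[OF Vf_cont])
    fix x assume x: "s < x" "x < s'" "x \<notin> range tsw \<inter> {..s'}"
    hence x': "x > t1" "x \<notin> range tsw" using s by auto
    obtain D where D: "(Vf has_real_derivative D) (at x)" "D \<le> - Wf x" using Vf_deriv[OF x'] by blast
    have "(f has_real_derivative D + \<alpha>) (at x)"
      unfolding f_def using DERIV_add[OF D(1) DERIV_cmult[OF DERIV_ident, of \<alpha>]] by simp
    moreover have "D + \<alpha> \<le> 0" using D(2) W[OF x(1,2) x'(2)] by linarith
    ultimately show "\<exists>y. (f has_real_derivative y) (at x) \<and> y \<le> 0" by blast
  qed
  thus ?thesis unfolding f_def by (simp add: algebra_simps)
qed

lemma V_mono: "t1 \<le> s \<Longrightarrow> s \<le> s' \<Longrightarrow> Vf s' \<le> Vf s"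
  using V_drop[of s s' 0] Wf_nonneg by simp

lemma term_lb: "(norm v)^2 + 2 * inner v e + k * (norm e)^2 \<ge> (norm v)^2 / 2 + (norm e)^2"
  for v e :: "real^'m"
proof -
  have "- (2 * inner v e) \<le> 2 * (norm v * norm e)"
    using Cauchy_Schwarz_ineq2[of v e] by linarith
  also have "\<dots> = 2 * norm v * norm e" by simp
  also have "\<dots> \<le> 1/2 * (norm v)^2 + (norm e)^2 / (1/2)" by (rule young) simp
  finally have 1: "- (2 * inner v e) \<le> 1/2 * (norm v)^2 + 2 * (norm e)^2" by simp
  have "(k - 3) * (norm e)^2 \<ge> 0" using k_pos by simp
  thus ?thesis using 1 by (simp add: algebra_simps)
qed

lemma Vf_lb: "i \<in> V \<Longrightarrow> Vf t \<ge> (norm (q' i t))^2 / 2 + (norm (q i t - x0))^2"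
proof -
  assume i: "i \<in> V"
  let ?f = "\<lambda>i. (norm (q' i t))^2 + 2 * inner (q' i t) (q i t - x0) + k * (norm (q i t - x0))^2"
  have nn: "\<And>j. j \<in> V \<Longrightarrow> ?f j \<ge> 0"
  proof -
    fix j
    have "(norm (q' j t))^2 / 2 + (norm (q j t - x0))^2 \<ge> 0" by simp
    thus "?f j \<ge> 0" using term_lb[of "q' j t" "q j t - x0"] by linarith
  qed
  have "?f i \<le> sum ?f V"
    by (rule member_le_sum[OF i]) (use nn in auto)
  thus ?thesis unfolding Vf_def using term_lb[of "q' i t" "q i t - x0"] by linarith
qed

lemma Vf_nonneg: "Vf t \<ge> 0"
  unfolding Vf_def
proof (rule sum_nonneg)
  fix j
  have "(norm (q' j t))^2 / 2 + (norm (q j t - x0))^2 \<ge> 0" by simp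
  thus "(norm (q' j t))^2 + 2 * inner (q' j t) (q j t - x0) + k * (norm (q j t - x0))^2 \<ge> 0"
    using term_lb[of "q' j t" "q j t - x0"] by linarith
qed

definition "R = sqrt (2 * Vf t1) + 1"

lemma R_pos: "R > 0"
  unfolding R_def using Vf_nonneg[of t1] by (simp add: add_nonneg_pos)

lemma bnd: assumes i: "i \<in> V" and t: "t \<ge> t1"
  shows "norm (q' i t) \<le> R" "norm (q i t - x0) \<le> R"
proof -
  have V: "Vf t \<le> Vf t1" by (rule V_mono[OF order_refl t])
  have lb: "(norm (q' i t))^2 / 2 + (norm (q i t - x0))^2 \<le> Vf t1" using Vf_lb[OF i, of t] V by linarith
  have "(norm (q' i t))^2 \<le> 2 * Vf t1" using lb zero_le_power2[of "norm (q i t - x0)"] by linarith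
  hence "norm (q' i t) \<le> sqrt (2 * Vf t1)" by (simp add: real_le_rsqrt)
  thus "norm (q' i t) \<le> R" unfolding R_def by simp
  have "(norm (q i t - x0))^2 \<le> 2 * Vf t1" using lb zero_le_power2[of "norm (q' i t)"] Vf_nonneg[of t1] by linarith
  hence "norm (q i t - x0) \<le> sqrt (2 * Vf t1)" by (simp add: real_le_rsqrt)
  thus "norm (q i t - x0) \<le> R" unfolding R_def by simp
qed

definition "B = k * R + R + real n * a_hi * (2 * R)"

lemma B_pos: "B > 0"
  unfolding B_def using k_pos R_pos a_hi_pos
  by (intro add_pos_nonneg) (auto intro: mult_nonneg_nonneg)

lemma g_bnd: "i \<in> V \<Longrightarrow> norm (x - cp i x) \<le> norm (x - x0)"
proof -
  assume i: "i \<in> V"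
  have "dist x (closest_point (X i) x) \<le> dist x x0" by (rule closest_point_le[OF X_closed[OF i] x0_in[OF i]])
  thus ?thesis unfolding cp_def by (simp add: dist_norm)
qed

lemma qdd_bnd: assumes i: "i \<in> V" and t: "t > t1" "t \<notin> range tsw"
  shows "norm (q'' i t) \<le> B"
proof -
  have tt0: "t > t0" "t \<ge> 0" "t \<ge> t1" using t by (auto simp: t1_def)
  have eq: "q'' i t = - (k *\<^sub>R q' i t) - (q i t - cp i (q i t)) - (\<Sum>j\<in>neighbors (\<sigma> t) i. a i j t *\<^sub>R (q i t - q j t))"
    using ode[OF i tt0(1) t(2)] unfolding cp_def by blast
  have nb: "neighbors (\<sigma> t) i \<subseteq> V" using nbr_sub tt0 by auto
  have fin: "finite (neighbors (\<sigma> t) i)" using nb finite_subset by blast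
  have "norm (\<Sum>j\<in>neighbors (\<sigma> t) i. a i j t *\<^sub>R (q i t - q j t)) \<le> (\<Sum>j\<in>neighbors (\<sigma> t) i. norm (a i j t *\<^sub>R (q i t - q j t)))"
    by (rule norm_sum)
  also have "\<dots> \<le> (\<Sum>j\<in>neighbors (\<sigma> t) i. a_hi * (2 * R))"
  proof (rule sum_mono)
    fix j assume "j \<in> neighbors (\<sigma> t) i"
    hence j: "j \<in> V" using nb by auto
    have ab: "a_lo \<le> a i j t \<and> a i j t \<le> a_hi" using a_bounds[OF i j tt0(2)] .
    have "norm (q i t - q j t) \<le> norm (q i t - x0) + norm (q j t - x0)"
      using norm_triangle_ineq4[of "q i t - x0" "q j t - x0"] by simp
    also have "\<dots> \<le> 2 * R" using bnd(2)[OF i tt0(3)] bnd(2)[OF j tt0(3)] by simp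
    finally have d: "norm (q i t - q j t) \<le> 2 * R" .
    have "norm (a i j t *\<^sub>R (q i t - q j t)) = a i j t * norm (q i t - q j t)"
      using ab a_lo_pos by simp
    also have "\<dots> \<le> a_hi * (2 * R)"
      using ab a_lo_pos d by (intro mult_mono) auto
    finally show "norm (a i j t *\<^sub>R (q i t - q j t)) \<le> a_hi * (2 * R)" .
  qed
  also have "\<dots> = real (card (neighbors (\<sigma> t) i)) * (a_hi * (2 * R))" by simp
  also have "\<dots> \<le> real n * (a_hi * (2 * R))"
    using card_mono[OF _ nb] a_hi_pos R_pos by (intro mult_right_mono) auto
  finally have L: "norm (\<Sum>j\<in>neighbors (\<sigma> t) i. a i j t *\<^sub>R (q i t - q j t)) \<le> real n * a_hi * (2 * R)"
    by simp
  have G: "norm (q i t - cp i (q i t)) \<le> R" using g_bnd[OF i, of "q i t"] bnd(2)[OF i tt0(3)] by linarith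
  have K: "norm (k *\<^sub>R q' i t) \<le> k * R" using bnd(1)[OF i tt0(3)] k_pos by (simp add: mult_left_mono)
  have "norm (q'' i t) \<le> norm (k *\<^sub>R q' i t) + norm (q i t - cp i (q i t)) + norm (\<Sum>j\<in>neighbors (\<sigma> t) i. a i j t *\<^sub>R (q i t - q j t))"
  proof -
    have 1: "norm (- (k *\<^sub>R q' i t) - (q i t - cp i (q i t)) - (\<Sum>j\<in>neighbors (\<sigma> t) i. a i j t *\<^sub>R (q i t - q j t)))
      \<le> norm (- (k *\<^sub>R q' i t) - (q i t - cp i (q i t))) + norm (\<Sum>j\<in>neighbors (\<sigma> t) i. a i j t *\<^sub>R (q i t - q j t))"
      by (rule norm_triangle_ineq4)
    have 2: "norm (- (k *\<^sub>R q' i t) - (q i t - cp i (q i t))) \<le> norm (- (k *\<^sub>R q' i t)) + norm (q i t - cp i (q i t))"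
      by (rule norm_triangle_ineq4)
    have 3: "norm (- (k *\<^sub>R q' i t)) = norm (k *\<^sub>R q' i t)" by (rule norm_minus_cancel)
    show ?thesis unfolding eq using 1 2 3 by linarith
  qed
  thus ?thesis using L G K unfolding B_def by linarith
qed

lemma q'_lip: assumes i: "i \<in> V" and s: "t1 \<le> s" "s \<le> s'"
  shows "norm (q' i s' - q' i s) \<le> B * (s' - s)"
proof (rule lip_finite_exc[OF sw_fin[of s'] s(2)])
  have "{s..s'} \<subseteq> {t0..}" using s by (auto simp: t1_def)
  thus "continuous_on {s..s'} (q' i)" by (rule continuous_on_subset[OF q'c[OF i]])
  show "0 \<le> B" using B_pos by simp
  fix x assume x: "s < x" "x < s'" "x \<notin> range tsw \<inter> {..s'}"
  hence x': "x > t1" "x > t0" "x \<notin> range tsw" using s by (auto simp: t1_def)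
  show "\<exists>g'. (q' i has_vector_derivative g') (at x) \<and> norm g' \<le> B"
    using ode[OF i x'(2,3)] qdd_bnd[OF i x'(1,3)] by blast
qed

lemma q_lip: assumes i: "i \<in> V" and s: "t1 \<le> s" "s \<le> s'"
  shows "norm (q i s' - q i s) \<le> R * (s' - s)"
proof (rule lip_finite_exc[OF finite.emptyI s(2)])
  have "{s..s'} \<subseteq> {t0..}" using s by (auto simp: t1_def)
  thus "continuous_on {s..s'} (q i)" by (rule continuous_on_subset[OF qc[OF i]])
  show "0 \<le> R" using R_pos by simp
  fix x assume x: "s < x" "x < s'" "x \<notin> {}"
  hence x': "x > t1" "x > t0" using s by (auto simp: t1_def)
  show "\<exists>g'. (q i has_vector_derivative g') (at x) \<and> norm g' \<le> R"
    using qd_at[OF i x'(2)] bnd(1)[OF i less_imp_le[OF x'(1)]] by blast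
qed

lemma V_osc: assumes "\<eta> > 0" shows "\<exists>T0\<ge>t1. \<forall>s\<ge>T0. \<forall>s'\<ge>s. Vf s - Vf s' < \<eta>"
proof -
  have nn: "\<And>t. Vf t \<ge> 0" by (rule Vf_nonneg)
  define L where "L = Inf (Vf ` {t1..})"
  have bdd: "bdd_below (Vf ` {t1..})" by (rule bdd_belowI[where m=0]) (use nn in auto)
  have ne: "Vf ` {t1..} \<noteq> {}" by auto
  have "\<exists>y\<in>Vf ` {t1..}. y < L + \<eta>"
    unfolding L_def by (rule cInf_lessD[OF ne]) (use assms in simp)
  then obtain T0 where T0: "T0 \<ge> t1" "Vf T0 < L + \<eta>" by auto
  show ?thesis
  proof (intro exI[of _ T0] conjI allI impI)
    show "T0 \<ge> t1" by fact
    fix s s' assume ss: "s \<ge> T0" "s' \<ge> s"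
    have "L \<le> Vf s'" unfolding L_def by (rule cInf_lower[OF _ bdd]) (use ss T0 in auto)
    moreover have "Vf s \<le> Vf T0" by (rule V_mono[OF T0(1) ss(1)])
    ultimately show "Vf s - Vf s' < \<eta>" using T0 by linarith
  qed
qed

end


context sys begin

lemma Wf_ge_v: "i \<in> V \<Longrightarrow> t \<ge> t0 \<Longrightarrow> Wf t \<ge> (norm (q' i t))^2"
proof -
  assume i: "i \<in> V" and t: "t \<ge> t0"
  have 1: "(norm (q' i t))^2 \<le> (\<Sum>i\<in>V. (norm (q' i t))^2)"
    by (rule member_le_sum[OF i]) auto
  have 2: "(\<Sum>i\<in>V. (norm (q i t - cp i (q i t)))^2) \<ge> 0" by (rule sum_nonneg) auto
  have 3: "a_lo/2 * (\<Sum>p\<in>\<sigma> t. (norm (q (fst p) t - q (snd p) t))^2) \<ge> 0"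
    using a_lo_pos by (intro mult_nonneg_nonneg sum_nonneg) auto
  show ?thesis unfolding Wf_def using 1 2 3 by linarith
qed

lemma Wf_ge_g: "i \<in> V \<Longrightarrow> t \<ge> t0 \<Longrightarrow> Wf t \<ge> (norm (q i t - cp i (q i t)))^2"
proof -
  assume i: "i \<in> V" and t: "t \<ge> t0"
  have 1: "(norm (q i t - cp i (q i t)))^2 \<le> (\<Sum>i\<in>V. (norm (q i t - cp i (q i t)))^2)"
    by (rule member_le_sum[OF i]) auto
  have 2: "(\<Sum>i\<in>V. (norm (q' i t))^2) \<ge> 0" by (rule sum_nonneg) auto
  have 3: "a_lo/2 * (\<Sum>p\<in>\<sigma> t. (norm (q (fst p) t - q (snd p) t))^2) \<ge> 0"
    using a_lo_pos by (intro mult_nonneg_nonneg sum_nonneg) auto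
  show ?thesis unfolding Wf_def using 1 2 3 by linarith
qed

lemma Wf_ge_e: "(u, v) \<in> \<sigma> t \<Longrightarrow> t \<ge> t0 \<Longrightarrow> Wf t \<ge> a_lo/2 * (norm (q u t - q v t))^2"
proof -
  assume p: "(u, v) \<in> \<sigma> t" and t: "t \<ge> t0"
  have 1: "(norm (q u t - q v t))^2 \<le> (\<Sum>p\<in>\<sigma> t. (norm (q (fst p) t - q (snd p) t))^2)"
  proof -
    have "(\<lambda>p. (norm (q (fst p) t - q (snd p) t))^2) (u, v) \<le> (\<Sum>p\<in>\<sigma> t. (\<lambda>p. (norm (q (fst p) t - q (snd p) t))^2) p)"
      by (rule member_le_sum[OF p]) (use E_fin[OF t] in auto)
    thus ?thesis by simp
  qed
  have 2: "(\<Sum>i\<in>V. (norm (q' i t))^2) \<ge> 0" by (rule sum_nonneg) auto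
  have 4: "(\<Sum>i\<in>V. (norm (q i t - cp i (q i t)))^2) \<ge> 0" by (rule sum_nonneg) auto
  have 3: "a_lo/2 * (norm (q u t - q v t))^2 \<le> a_lo/2 * (\<Sum>p\<in>\<sigma> t. (norm (q (fst p) t - q (snd p) t))^2)"
    using 1 a_lo_pos by (intro mult_left_mono) auto
  show ?thesis unfolding Wf_def using 3 2 4 by linarith
qed

lemma no_drop:
  assumes "\<alpha> > 0" "ll > 0"
  shows "\<exists>T0\<ge>t1. \<forall>s\<ge>T0. \<exists>\<tau>. s < \<tau> \<and> \<tau> < s + ll \<and> \<tau> \<notin> range tsw \<and> Wf \<tau> < \<alpha>"
proof -
  obtain T0 where T0: "T0 \<ge> t1" "\<forall>s\<ge>T0. \<forall>s'\<ge>s. Vf s - Vf s' < \<alpha> * ll"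
    using V_osc[of "\<alpha> * ll"] assms by auto
  show ?thesis
  proof (rule exI[of _ T0], intro conjI allI impI)
    show "T0 \<ge> t1" by fact
    fix s assume s: "s \<ge> T0"
    show "\<exists>\<tau>. s < \<tau> \<and> \<tau> < s + ll \<and> \<tau> \<notin> range tsw \<and> Wf \<tau> < \<alpha>"
    proof (rule ccontr)
      assume "\<not> ?thesis"
      hence W: "\<And>\<tau>. s < \<tau> \<Longrightarrow> \<tau> < s + ll \<Longrightarrow> \<tau> \<notin> range tsw \<Longrightarrow> Wf \<tau> \<ge> \<alpha>"
        by (meson not_le)
      have "Vf (s + ll) \<le> Vf s - \<alpha> * (s + ll - s)"
        by (rule V_drop[OF _ _ W]) (use s T0 assms in auto)
      moreover have "Vf s - Vf (s + ll) < \<alpha> * ll" using T0(2) s assms(2) by simp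
      ultimately show False by simp
    qed
  qed
qed

lemma q'_ev: assumes i: "i \<in> V" and e: "\<epsilon> > 0" shows "\<exists>T\<ge>t1. \<forall>t\<ge>T. norm (q' i t) < \<epsilon>"
proof -
  define ll where "ll = \<epsilon> / (2 * B)"
  have lp: "ll > 0" unfolding ll_def using e B_pos by simp
  have a: "(\<epsilon>/2)^2 > 0" using e by simp
  obtain T0 where T0: "T0 \<ge> t1" "\<forall>s\<ge>T0. \<exists>\<tau>. s < \<tau> \<and> \<tau> < s + ll \<and> \<tau> \<notin> range tsw \<and> Wf \<tau> < (\<epsilon>/2)^2"
    using no_drop[OF a lp] by blast
  show ?thesis
  proof (rule exI[of _ T0], intro conjI allI impI)
    show "T0 \<ge> t1" by fact
    fix t assume t: "t \<ge> T0"
    show "norm (q' i t) < \<epsilon>"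
    proof (rule ccontr)
      assume "\<not> ?thesis"
      hence big: "norm (q' i t) \<ge> \<epsilon>" by simp
      obtain \<tau> where tau: "t < \<tau>" "\<tau> < t + ll" "Wf \<tau> < (\<epsilon>/2)^2" using T0(2) t by blast
      have tt: "t \<ge> t1" "\<tau> \<ge> t0" using t T0 tau by (auto simp: t1_def)
      have "norm (q' i \<tau> - q' i t) \<le> B * (\<tau> - t)" by (rule q'_lip[OF i tt(1)]) (use tau in simp)
      also have "\<dots> \<le> B * ll" using tau B_pos by simp
      also have "\<dots> = \<epsilon>/2" unfolding ll_def using B_pos by simp
      finally have "norm (q' i \<tau> - q' i t) \<le> \<epsilon>/2" .
      hence "norm (q' i \<tau>) \<ge> \<epsilon>/2"
        using big norm_triangle_ineq2[of "q' i t" "q' i \<tau>"] by (simp add: norm_minus_commute)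
      hence "(norm (q' i \<tau>))^2 \<ge> (\<epsilon>/2)^2" using e by (intro power_mono) auto
      thus False using Wf_ge_v[OF i tt(2)] tau(3) by linarith
    qed
  qed
qed

lemma infdist_le_g: "i \<in> V \<Longrightarrow> infdist x (X i) \<le> norm (x - cp i x)"
proof -
  assume i: "i \<in> V"
  have ne: "X i \<noteq> {}" using x0_in[OF i] by blast
  have "infdist x (X i) \<le> dist x (cp i x)"
    unfolding cp_def by (rule infdist_le[OF closest_point_in_set[OF X_closed[OF i] ne]])
  thus ?thesis by (simp add: dist_norm)
qed

lemma g_ev: assumes i: "i \<in> V" and e: "\<epsilon> > 0" shows "\<exists>T\<ge>t1. \<forall>t\<ge>T. infdist (q i t) (X i) < \<epsilon>"
proof -
  define ll where "ll = \<epsilon> / (2 * R)"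
  have lp: "ll > 0" unfolding ll_def using e R_pos by simp
  have a: "(\<epsilon>/2)^2 > 0" using e by simp
  obtain T0 where T0: "T0 \<ge> t1" "\<forall>s\<ge>T0. \<exists>\<tau>. s < \<tau> \<and> \<tau> < s + ll \<and> \<tau> \<notin> range tsw \<and> Wf \<tau> < (\<epsilon>/2)^2"
    using no_drop[OF a lp] by blast
  show ?thesis
  proof (rule exI[of _ T0], intro conjI allI impI)
    show "T0 \<ge> t1" by fact
    fix t assume t: "t \<ge> T0"
    show "infdist (q i t) (X i) < \<epsilon>"
    proof (rule ccontr)
      assume "\<not> ?thesis"
      hence big: "infdist (q i t) (X i) \<ge> \<epsilon>" by simp
      obtain \<tau> where tau: "t < \<tau>" "\<tau> < t + ll" "Wf \<tau> < (\<epsilon>/2)^2" using T0(2) t by blast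
      have tt: "t \<ge> t1" "\<tau> \<ge> t0" using t T0 tau by (auto simp: t1_def)
      have "norm (q i \<tau> - q i t) \<le> R * (\<tau> - t)" by (rule q_lip[OF i tt(1)]) (use tau in simp)
      also have "\<dots> \<le> R * ll" using tau R_pos by simp
      also have "\<dots> = \<epsilon>/2" unfolding ll_def using R_pos by simp
      finally have d: "dist (q i t) (q i \<tau>) \<le> \<epsilon>/2" by (simp add: dist_norm norm_minus_commute)
      have "infdist (q i t) (X i) \<le> infdist (q i \<tau>) (X i) + dist (q i t) (q i \<tau>)" by (rule infdist_triangle)
      hence "infdist (q i \<tau>) (X i) \<ge> \<epsilon>/2" using big d by linarith
      hence "norm (q i \<tau> - cp i (q i \<tau>)) \<ge> \<epsilon>/2" using infdist_le_g[OF i, of "q i \<tau>"] by linarith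
      hence "(norm (q i \<tau> - cp i (q i \<tau>)))^2 \<ge> (\<epsilon>/2)^2" using e by (intro power_mono) auto
      thus False using Wf_ge_g[OF i tt(2)] tau(3) by linarith
    qed
  qed
qed

end


lemma ev_to_tendsto:
  fixes f :: "real \<Rightarrow> 'a::real_normed_vector"
  assumes "\<And>\<epsilon>. \<epsilon> > 0 \<Longrightarrow> \<exists>T. \<forall>t\<ge>T. norm (f t) < \<epsilon>"
  shows "(f \<longlongrightarrow> 0) at_top"
proof (rule tendstoI)
  fix \<epsilon> :: real assume e: "\<epsilon> > 0"
  obtain T where "\<forall>t\<ge>T. norm (f t) < \<epsilon>" using assms[OF e] by blast
  thus "eventually (\<lambda>t. dist (f t) 0 < \<epsilon>) at_top"
    unfolding eventually_at_top_linorder by (intro exI[of _ T]) simp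
qed

lemma path_bound:
  fixes f :: "nat \<Rightarrow> 'a::real_normed_vector"
  assumes "\<And>u v. (u, v) \<in> Rel \<Longrightarrow> norm (f u - f v) < \<delta>"
  shows "(i, j) \<in> Rel ^^ m \<Longrightarrow> norm (f i - f j) \<le> real m * \<delta>"
proof (induction m arbitrary: j)
  case 0 thus ?case by simp
next
  case (Suc m)
  then obtain w where w: "(i, w) \<in> Rel ^^ m" "(w, j) \<in> Rel" by auto
  have "norm (f i - f j) \<le> norm (f i - f w) + norm (f w - f j)"
    using norm_triangle_ineq[of "f i - f w" "f w - f j"] by simp
  also have "\<dots> \<le> real m * \<delta> + \<delta>" using Suc.IH[OF w(1)] assms[OF w(2)] by linarith
  finally show ?case by (simp add: algebra_simps)
qed

context sys begin

lemma tsw_idx_fin: "finite {l. tsw l \<le> b}"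
proof -
  have "{l. tsw l \<le> b} \<subseteq> {..nat \<lceil>(b - t0) / \<tau>d\<rceil>}"
  proof
    fix l assume "l \<in> {l. tsw l \<le> b}"
    hence "t0 + real l * \<tau>d \<le> b" using tsw_ge[of l] by simp
    hence "real l \<le> (b - t0) / \<tau>d" using \<tau>d_pos by (simp add: field_simps)
    hence "real l \<le> real (nat \<lceil>(b - t0) / \<tau>d\<rceil>)" by linarith
    thus "l \<in> {..nat \<lceil>(b - t0) / \<tau>d\<rceil>}" by simp
  qed
  thus ?thesis by (rule finite_subset) simp
qed

lemma exists_l: assumes s: "s \<ge> t0" shows "\<exists>l. tsw l \<le> s \<and> s < tsw (Suc l)"
proof -
  define L where "L = {l. tsw l \<le> s}"
  have fin: "finite L" unfolding L_def by (rule tsw_idx_fin)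
  have "0 \<in> L" unfolding L_def using tsw_0 s by simp
  hence ne: "L \<noteq> {}" by blast
  define l where "l = Max L"
  have "l \<in> L" unfolding l_def using Max_in[OF fin ne] .
  moreover have "Suc l \<notin> L"
  proof
    assume "Suc l \<in> L"
    hence "Suc l \<le> l" unfolding l_def using Max_ge[OF fin] by blast
    thus False by simp
  qed
  ultimately show ?thesis unfolding L_def by (intro exI[of _ l]) auto
qed

lemma q_small_lip:
  assumes i: "i \<in> V" and T1: "T1 \<ge> t1" and sm: "\<And>\<tau>. \<tau> \<ge> T1 \<Longrightarrow> norm (q' i \<tau>) < \<mu>"
    and x: "x \<ge> T1" and y: "y \<ge> T1"
  shows "norm (q i x - q i y) \<le> \<mu> * \<bar>x - y\<bar>"
proof -
  have mu: "\<mu> \<ge> 0" using sm[of T1] by (meson norm_ge_zero order_trans less_imp_le order_refl)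
  have gen: "norm (q i b - q i a) \<le> \<mu> * (b - a)" if ab: "T1 \<le> a" "a \<le> b" for a b
  proof (rule lip_finite_exc[OF finite.emptyI ab(2) _ mu])
    have "{a..b} \<subseteq> {t0..}" using ab T1 by (auto simp: t1_def)
    thus "continuous_on {a..b} (q i)" by (rule continuous_on_subset[OF qc[OF i]])
    fix z assume z: "a < z" "z < b" "z \<notin> {}"
    hence z': "z > t0" "z \<ge> T1" using ab T1 by (auto simp: t1_def)
    show "\<exists>g'. (q i has_vector_derivative g') (at z) \<and> norm g' \<le> \<mu>"
      using qd_at[OF i z'(1)] sm[OF z'(2)] less_imp_le by blast
  qed
  show ?thesis
  proof (cases "x \<le> y")
    case True
    thus ?thesis using gen[OF x True] by (simp add: norm_minus_commute abs_if)
  next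
    case False
    thus ?thesis using gen[OF y] by (simp add: abs_if)
  qed
qed

lemma q'_all_ev: assumes "\<mu> > 0" shows "\<exists>T1\<ge>t1. \<forall>\<tau>\<ge>T1. \<forall>i\<in>V. norm (q' i \<tau>) < \<mu>"
proof -
  have "eventually (\<lambda>\<tau>. \<forall>i\<in>V. norm (q' i \<tau>) < \<mu>) at_top"
  proof (rule eventually_ball_finite)
    show "finite V" by simp
    show "\<forall>i\<in>V. eventually (\<lambda>\<tau>. norm (q' i \<tau>) < \<mu>) at_top"
    proof
      fix i assume i: "i \<in> V"
      obtain T where "\<forall>t\<ge>T. norm (q' i t) < \<mu>" using q'_ev[OF i assms] by blast
      thus "eventually (\<lambda>\<tau>. norm (q' i \<tau>) < \<mu>) at_top"
        unfolding eventually_at_top_linorder by blast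
    qed
  qed
  then obtain T where T: "\<forall>\<tau>\<ge>T. \<forall>i\<in>V. norm (q' i \<tau>) < \<mu>"
    unfolding eventually_at_top_linorder by blast
  show ?thesis by (rule exI[of _ "max T t1"]) (use T in auto)
qed

lemma cons_edges:
  assumes d: "\<delta> > 0"
  shows "\<exists>T2. \<forall>t\<ge>T2. \<forall>s u v. t \<le> s \<longrightarrow> s < t + T \<longrightarrow> (u, v) \<in> \<sigma> s \<longrightarrow> norm (q u t - q v t) < \<delta>"
proof -
  define \<alpha> where "\<alpha> = a_lo/2 * (\<delta>/2)^2"
  define ll where "ll = \<tau>d/2"
  define \<mu> where "\<mu> = \<delta> / (4 * (T + \<tau>d))"
  have ap: "\<alpha> > 0" unfolding \<alpha>_def using a_lo_pos d by simp
  have lp: "ll > 0" unfolding ll_def using \<tau>d_pos by simp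
  have mp: "\<mu> > 0" unfolding \<mu>_def using d T_pos \<tau>d_pos by simp
  obtain T0 where T0: "T0 \<ge> t1" "\<forall>s\<ge>T0. \<exists>\<tau>. s < \<tau> \<and> \<tau> < s + ll \<and> \<tau> \<notin> range tsw \<and> Wf \<tau> < \<alpha>"
    using no_drop[OF ap lp] by blast
  obtain T1 where T1: "T1 \<ge> t1" "\<forall>\<tau>\<ge>T1. \<forall>i\<in>V. norm (q' i \<tau>) < \<mu>"
    using q'_all_ev[OF mp] by blast
  show ?thesis
  proof (rule exI[of _ "max T0 T1 + \<tau>d"], intro allI impI)
    fix t s u v assume t: "t \<ge> max T0 T1 + \<tau>d" and s: "t \<le> s" "s < t + T" and uv: "(u, v) \<in> \<sigma> s"
    have tt: "t \<ge> t1" "t \<ge> T1" "t \<ge> T0" using t T0(1) T1(1) \<tau>d_pos max.cobounded1[of T0 T1] max.cobounded2[of T1 T0] by linarith+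
    have st0: "s \<ge> t0" using s tt by (auto simp: t1_def)
    have uvV: "u \<in> V" "v \<in> V" using E_sub[OF st0] uv by auto
    show "norm (q u t - q v t) < \<delta>"
    proof (rule ccontr)
      assume "\<not> ?thesis"
      hence big: "norm (q u t - q v t) \<ge> \<delta>" by simp
      obtain l where l: "tsw l \<le> s" "s < tsw (Suc l)" using exists_l[OF st0] by blast
      define c where "c = max (tsw l) (s - \<tau>d/2)"
      have c1: "c \<ge> t - \<tau>d/2" unfolding c_def using s by simp
      have cT0: "c \<ge> T0" using c1 t \<tau>d_pos max.cobounded1[of T0 T1] by linarith
      obtain \<tau> where tau: "c < \<tau>" "\<tau> < c + ll" "Wf \<tau> < \<alpha>" using T0(2) cT0 by blast
      have tau_l: "tsw l \<le> \<tau>" "\<tau> < tsw (Suc l)"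
      proof -
        show "tsw l \<le> \<tau>" using tau(1) unfolding c_def by simp
        show "\<tau> < tsw (Suc l)"
        proof (cases "tsw l \<le> s - \<tau>d/2")
          case True
          hence "c = s - \<tau>d/2" unfolding c_def by simp
          thus ?thesis using tau(2) l(2) unfolding ll_def by simp
        next
          case False
          hence "c = tsw l" unfolding c_def by simp
          thus ?thesis using tau(2) tsw_dwell[of l] \<tau>d_pos unfolding ll_def by simp
        qed
      qed
      have sig: "\<sigma> \<tau> = \<sigma> s" using \<sigma>_pc[OF tau_l] \<sigma>_pc[OF l] by simp
      have uvt: "(u, v) \<in> \<sigma> \<tau>" using uv sig by simp
      have tauT1: "\<tau> \<ge> T1" using tau(1) c1 t \<tau>d_pos max.cobounded2[of T1 T0] by linarith
      have cub: "c + ll \<le> s + \<tau>d/2" unfolding c_def ll_def using l(1) \<tau>d_pos by simp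
      have dist: "\<bar>\<tau> - t\<bar> \<le> T + \<tau>d" using tau(1,2) c1 cub s \<tau>d_pos by (simp add: abs_le_iff)
      have mub: "\<mu> * \<bar>\<tau> - t\<bar> \<le> \<delta>/4"
      proof -
        have "\<mu> * \<bar>\<tau> - t\<bar> \<le> \<mu> * (T + \<tau>d)" using dist mp by (intro mult_left_mono) auto
        also have "\<dots> = \<delta>/4" unfolding \<mu>_def using T_pos \<tau>d_pos by (simp add: field_simps)
        finally show ?thesis .
      qed
      have du: "norm (q u \<tau> - q u t) \<le> \<delta>/4"
        using q_small_lip[OF uvV(1) T1(1) _ tauT1 tt(2), of \<mu>] T1(2) uvV mub by auto
      have dv: "norm (q v \<tau> - q v t) \<le> \<delta>/4"
        using q_small_lip[OF uvV(2) T1(1) _ tauT1 tt(2), of \<mu>] T1(2) uvV mub by auto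
      have eq: "q u t - q v t = (q u \<tau> - q v \<tau>) - (q u \<tau> - q u t) + (q v \<tau> - q v t)" by simp
      have "norm (q u t - q v t) \<le> norm (q u \<tau> - q v \<tau>) + norm (q u \<tau> - q u t) + norm (q v \<tau> - q v t)"
      proof -
        have 1: "norm ((q u \<tau> - q v \<tau>) - (q u \<tau> - q u t) + (q v \<tau> - q v t)) \<le> norm ((q u \<tau> - q v \<tau>) - (q u \<tau> - q u t)) + norm (q v \<tau> - q v t)"
          by (rule norm_triangle_ineq)
        have 2: "norm ((q u \<tau> - q v \<tau>) - (q u \<tau> - q u t)) \<le> norm (q u \<tau> - q v \<tau>) + norm (q u \<tau> - q u t)"
          by (rule norm_triangle_ineq4)
        show ?thesis unfolding eq using 1 2 by linarith
      qed
      hence "norm (q u \<tau> - q v \<tau>) \<ge> \<delta>/2" using big du dv by linarith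
      hence "(norm (q u \<tau> - q v \<tau>))^2 \<ge> (\<delta>/2)^2" using d by (intro power_mono) auto
      hence "a_lo/2 * (norm (q u \<tau> - q v \<tau>))^2 \<ge> \<alpha>" unfolding \<alpha>_def using a_lo_pos by simp
      moreover have "\<tau> \<ge> t0" using tau(1) cT0 T0(1) by (simp add: t1_def)
      ultimately show False using Wf_ge_e[OF uvt] tau(3) by fastforce
    qed
  qed
qed

end


context sys begin

lemma cons_ev: assumes e: "\<epsilon> > 0"
  shows "\<exists>T. \<forall>t\<ge>T. \<forall>i\<in>V. \<forall>j\<in>V. norm (q i t - q j t) < \<epsilon>"
proof -
  define \<delta> where "\<delta> = \<epsilon> / (real (n * n) + 1)"
  have "real (n * n) \<ge> 0" by (rule of_nat_0_le_iff)
  hence "real (n * n) + 1 > 0" by linarith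
  hence dp: "\<delta> > 0" unfolding \<delta>_def using e by (intro divide_pos_pos)
  obtain T2 where T2: "\<forall>t\<ge>T2. \<forall>s u v. t \<le> s \<longrightarrow> s < t + T \<longrightarrow> (u, v) \<in> \<sigma> s \<longrightarrow> norm (q u t - q v t) < \<delta>"
    using cons_edges[OF dp] by blast
  define T3 where "T3 = max T2 t0"
  show ?thesis
  proof (rule exI[of _ T3], intro allI impI ballI)
    fix t i j assume t: "t \<ge> T3" and i: "i \<in> V" and j: "j \<in> V"
    have tT2: "t \<ge> T2" and tt0: "t \<ge> t0" using t unfolding T3_def by auto
    define Rel where "Rel = (\<Union>s\<in>{t..<t+T}. \<sigma> s) \<inter> (V \<times> V)"
    have con: "(i, j) \<in> Rel\<^sup>*" using jc[OF tt0] i j unfolding graph_connected_def Rel_def by blast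
    have finR: "finite Rel" unfolding Rel_def by (rule finite_Int) simp
    have cardR: "card Rel \<le> n * n"
    proof -
      have "card Rel \<le> card (V \<times> V)" unfolding Rel_def by (rule card_mono) auto
      thus ?thesis by (simp add: card_cartesian_product)
    qed
    obtain m where m: "m \<le> card Rel" "(i, j) \<in> Rel ^^ m"
      using con rtrancl_finite_eq_relpow[OF finR] by blast
    have edge: "norm (q u t - q v t) < \<delta>" if uv: "(u, v) \<in> Rel" for u v
    proof -
      obtain s where s: "s \<in> {t..<t+T}" "(u, v) \<in> \<sigma> s" using uv unfolding Rel_def by blast
      thus ?thesis using T2 tT2 by auto
    qed
    have "norm (q i t - q j t) \<le> real m * \<delta>"
      by (rule path_bound[where f="\<lambda>i. q i t" and Rel=Rel, OF edge m(2)])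
    also have "\<dots> \<le> real (n * n) * \<delta>"
    proof (rule mult_right_mono)
      have "m \<le> n * n" using m(1) cardR by linarith
      thus "real m \<le> real (n * n)" by (rule of_nat_mono)
    qed (use dp in simp)
    also have "\<dots> < \<epsilon>"
    proof -
      define N where "N = real (n * n)"
      have N0: "N \<ge> 0" unfolding N_def by simp
      have "N / (N + 1) < 1" using N0 by simp
      hence "\<epsilon> * (N / (N + 1)) < \<epsilon> * 1" using e by (intro mult_strict_left_mono)
      moreover have "N * \<delta> = \<epsilon> * (N / (N + 1))" unfolding \<delta>_def N_def by simp
      ultimately show ?thesis unfolding N_def by simp
    qed
    finally show "norm (q i t - q j t) < \<epsilon>" .
  qed
qed

abbreviation "X0 \<equiv> (\<Inter>l\<in>V. X l)"

lemma X0_lemma: assumes e: "\<epsilon> > 0"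
  shows "\<exists>\<mu>>0. \<forall>x. norm (x - x0) \<le> R \<longrightarrow> (\<Sum>l\<in>V. infdist x (X l)) < \<mu> \<longrightarrow> infdist x X0 < \<epsilon>"
proof -
  define K where "K = cball x0 R \<inter> {x. \<epsilon> \<le> infdist x X0}"
  define F where "F x = (\<Sum>l\<in>V. infdist x (X l))" for x
  have cK: "compact K" unfolding K_def
    by (intro compact_Int_closed compact_cball closed_Collect_le continuous_on_const continuous_on_infdist continuous_on_id)
  have cF: "continuous_on K F" unfolding F_def
    by (intro continuous_on_sum continuous_on_infdist continuous_on_id)
  have mem: "x \<in> cball x0 R" if "norm (x - x0) \<le> R" for x
    using that by (simp add: dist_norm norm_minus_commute)
  show ?thesis
  proof (cases "K = {}")
    case True
    show ?thesis
    proof (rule exI[of _ 1], intro conjI allI impI)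
      fix x assume "norm (x - x0) \<le> R"
      hence "x \<in> cball x0 R" by (rule mem)
      thus "infdist x X0 < \<epsilon>" using True unfolding K_def by auto
    qed simp
  next
    case False
    obtain xm where xm: "xm \<in> K" "\<And>y. y \<in> K \<Longrightarrow> F xm \<le> F y"
      using continuous_attains_inf[OF cK False cF] by blast
    have Fpos: "F xm > 0"
    proof (rule ccontr)
      assume "\<not> F xm > 0"
      moreover have "F xm \<ge> 0" unfolding F_def by (rule sum_nonneg) (simp add: infdist_nonneg)
      ultimately have "F xm = 0" by simp
      hence z: "\<forall>l\<in>V. infdist xm (X l) = 0"
        unfolding F_def by (subst (asm) sum_nonneg_eq_0_iff) (auto simp: infdist_nonneg)
      have "xm \<in> X l" if l: "l \<in> V" for l
        using in_closed_iff_infdist_zero[OF X_closed[OF l], of xm] x0_in[OF l] z l by auto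
      hence "xm \<in> X0" by blast
      hence "infdist xm X0 = 0" by (rule infdist_zero)
      moreover have "infdist xm X0 \<ge> \<epsilon>" using xm(1) unfolding K_def by simp
      ultimately show False using e by simp
    qed
    show ?thesis
    proof (rule exI[of _ "F xm"], intro conjI allI impI)
      show "F xm > 0" by (rule Fpos)
      fix x assume x: "norm (x - x0) \<le> R" "(\<Sum>l\<in>V. infdist x (X l)) < F xm"
      show "infdist x X0 < \<epsilon>"
      proof (rule ccontr)
        assume "\<not> ?thesis"
        hence "x \<in> K" unfolding K_def using mem[OF x(1)] by simp
        hence "F xm \<le> F x" by (rule xm(2))
        thus False using x(2) unfolding F_def by simp
      qed
    qed
  qed
qed

lemma final_v: "i \<in> V \<Longrightarrow> (q' i \<longlongrightarrow> 0) at_top"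
proof -
  assume i: "i \<in> V"
  show ?thesis
  proof (rule ev_to_tendsto)
    fix \<epsilon> :: real assume "\<epsilon> > 0"
    thus "\<exists>T. \<forall>t\<ge>T. norm (q' i t) < \<epsilon>" using q'_ev[OF i] by blast
  qed
qed

lemma final_c: "i \<in> V \<Longrightarrow> j \<in> V \<Longrightarrow> ((\<lambda>t. q i t - q j t) \<longlongrightarrow> 0) at_top"
proof -
  assume i: "i \<in> V" and j: "j \<in> V"
  show ?thesis
  proof (rule ev_to_tendsto)
    fix \<epsilon> :: real assume "\<epsilon> > 0"
    then obtain T where "\<forall>t\<ge>T. \<forall>i\<in>V. \<forall>j\<in>V. norm (q i t - q j t) < \<epsilon>" using cons_ev by blast
    thus "\<exists>T. \<forall>t\<ge>T. norm (q i t - q j t) < \<epsilon>" using i j by blast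
  qed
qed

lemma final_x: "i \<in> V \<Longrightarrow> ((\<lambda>t. infdist (q i t) X0) \<longlongrightarrow> 0) at_top"
proof -
  assume i: "i \<in> V"
  show ?thesis
  proof (rule ev_to_tendsto)
    fix \<epsilon> :: real assume e: "\<epsilon> > 0"
    obtain \<mu> where mu: "\<mu> > 0" "\<And>x. norm (x - x0) \<le> R \<Longrightarrow> (\<Sum>l\<in>V. infdist x (X l)) < \<mu> \<Longrightarrow> infdist x X0 < \<epsilon>"
      using X0_lemma[OF e] by blast
    define e' where "e' = \<mu> / (2 * (real n + 1))"
    have ep: "e' > 0" unfolding e'_def using mu by simp
    have ev1: "eventually (\<lambda>t. \<forall>l\<in>V. infdist (q l t) (X l) < e') at_top"
    proof (rule eventually_ball_finite)
      show "finite V" by simp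
      show "\<forall>l\<in>V. eventually (\<lambda>t. infdist (q l t) (X l) < e') at_top"
      proof
        fix l assume l: "l \<in> V"
        obtain T where "\<forall>t\<ge>T. infdist (q l t) (X l) < e'" using g_ev[OF l ep] by blast
        thus "eventually (\<lambda>t. infdist (q l t) (X l) < e') at_top"
          unfolding eventually_at_top_linorder by blast
      qed
    qed
    have ev2: "eventually (\<lambda>t. \<forall>l\<in>V. norm (q i t - q l t) < e') at_top"
    proof -
      obtain T where "\<forall>t\<ge>T. \<forall>i\<in>V. \<forall>j\<in>V. norm (q i t - q j t) < e'" using cons_ev[OF ep] by blast
      thus ?thesis unfolding eventually_at_top_linorder using i by blast
    qed
    have ev3: "eventually (\<lambda>t. t \<ge> t1) at_top" by (rule eventually_ge_at_top)
    have "eventually (\<lambda>t. infdist (q i t) X0 < \<epsilon>) at_top"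
      using ev1 ev2 ev3
    proof eventually_elim
      case (elim t)
      have "(\<Sum>l\<in>V. infdist (q i t) (X l)) \<le> (\<Sum>l\<in>V. 2 * e')"
      proof (rule sum_mono)
        fix l assume l: "l \<in> V"
        have "infdist (q i t) (X l) \<le> infdist (q l t) (X l) + dist (q i t) (q l t)" by (rule infdist_triangle)
        moreover have "infdist (q l t) (X l) < e'" using elim(1) l by blast
        moreover have "norm (q i t - q l t) < e'" using elim(2) l by blast
        ultimately show "infdist (q i t) (X l) \<le> 2 * e'" by (simp add: dist_norm)
      qed
      also have "\<dots> = real n * (2 * e')" by simp
      also have "\<dots> < \<mu>" unfolding e'_def using mu by (simp add: field_simps)
      finally have s: "(\<Sum>l\<in>V. infdist (q i t) (X l)) < \<mu>" .
      show ?case by (rule mu(2)[OF bnd(2)[OF i elim(3)] s])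
    qed
    then obtain T where "\<forall>t\<ge>T. infdist (q i t) X0 < \<epsilon>" unfolding eventually_at_top_linorder by blast
    thus "\<exists>T. \<forall>t\<ge>T. norm (infdist (q i t) X0) < \<epsilon>" by (auto simp: infdist_nonneg)
  qed
qed

end


lemma spd_inj:
  fixes M :: "real^'m^'m"
  assumes "spd M" "M *v x = M *v y" shows "x = y"
proof (rule ccontr)
  assume ne: "x \<noteq> y"
  have "M *v (x - y) = 0" using assms(2) by (simp add: matrix_vector_mult_diff_distrib)
  moreover have "(x - y) \<bullet> (M *v (x - y)) > 0" using assms(1) ne unfolding spd_def by simp
  ultimately show False by simp
qed

lemma ode_red:
  fixes M C :: "real^'m^'m" and qdd qd g L :: "real^'m"
  assumes "spd M" and eq: "M *v qdd + C *v qd = C *v qd - k *\<^sub>R (M *v qd) - M *v g - M *v L"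
  shows "qdd = - (k *\<^sub>R qd) - g - L"
proof (rule spd_inj[OF assms(1)])
  have "M *v qdd = (M *v qdd + C *v qd) - C *v qd" by simp
  also have "\<dots> = (C *v qd - k *\<^sub>R (M *v qd) - M *v g - M *v L) - C *v qd" by (simp only: eq)
  also have "\<dots> = - (k *\<^sub>R (M *v qd)) - M *v g - M *v L" by simp
  finally have 1: "M *v qdd = - (k *\<^sub>R (M *v qd)) - M *v g - M *v L" .
  have 2: "M *v (- (k *\<^sub>R qd) - g - L) = - (k *\<^sub>R (M *v qd)) - M *v g - M *v L"
    by (simp add: matrix_vector_mult_diff_distrib matrix_vector_mult_scaleR linear_neg[OF matrix_vector_mul_linear])
  show "M *v qdd = M *v (- (k *\<^sub>R qd) - g - L)" using 1 2 by simp
qed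

theorem theorem2:
  fixes n :: nat
    and M :: "nat \<Rightarrow> real^'m \<Rightarrow> real^'m^'m"
    and C :: "nat \<Rightarrow> real^'m \<Rightarrow> real^'m \<Rightarrow> real^'m^'m"
    and X :: "nat \<Rightarrow> (real^'m) set"
    and P :: "(nat \<times> nat) set set"
    and \<sigma> :: "real \<Rightarrow> (nat \<times> nat) set"
    and t0 \<tau>d T a_lo a_hi :: real
    and tsw :: "nat \<Rightarrow> real"
    and a :: "nat \<Rightarrow> nat \<Rightarrow> real \<Rightarrow> real"
  assumes M_spd: "\<And>i x. i \<in> {1..n} \<Longrightarrow> spd (M i x)"
    and X_closed: "\<And>i. i \<in> {1..n} \<Longrightarrow> closed (X i)"
    and X_convex: "\<And>i. i \<in> {1..n} \<Longrightarrow> convex (X i)"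
    and X0_ne: "(\<Inter>i\<in>{1..n}. X i) \<noteq> {}"
    and X0_bdd: "bounded (\<Inter>i\<in>{1..n}. X i)"
    and P_fin: "finite P"
    and P_graphs: "\<And>G. G \<in> P \<Longrightarrow> undirected_graph_on {1..n} G"
    and \<sigma>_in: "\<And>t. t \<ge> t0 \<Longrightarrow> \<sigma> t \<in> P"
    and \<tau>d_pos: "\<tau>d > 0"
    and tsw_0: "tsw 0 = t0"
    and tsw_dwell: "\<And>l. tsw (Suc l) - tsw l \<ge> \<tau>d"
    and \<sigma>_pc: "\<And>l t. tsw l \<le> t \<Longrightarrow> t < tsw (Suc l) \<Longrightarrow> \<sigma> t = \<sigma> (tsw l)"
    and a_sym: "\<And>i j t. a i j t = a j i t"
    and a_cont: "\<And>i j. i \<in> {1..n} \<Longrightarrow> j \<in> {1..n} \<Longrightarrow> continuous_on {0..} (a i j)"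
    and a_pos: "a_lo > 0" "a_hi > 0"
    and a_bounds: "\<And>i j t. i \<in> {1..n} \<Longrightarrow> j \<in> {1..n} \<Longrightarrow> t \<ge> 0 \<Longrightarrow>
                     a_lo \<le> a i j t \<and> a i j t \<le> a_hi"
    and T_pos: "T > 0"
    and jointly_connected: "\<And>t. t \<ge> t0 \<Longrightarrow>
                     graph_connected {1..n} (\<Union>s\<in>{t..<t+T}. \<sigma> s)"
  shows "\<exists>k0>0. \<forall>k>k0. \<forall>(q :: nat \<Rightarrow> real \<Rightarrow> real^'m) q' q''.
     ((\<forall>i\<in>{1..n}. \<forall>t\<ge>t0. (q i has_vector_derivative q' i t) (at t within {t0..}))
      \<and> (\<forall>i\<in>{1..n}. continuous_on {t0..} (q' i))
      \<and> (\<forall>i\<in>{1..n}. \<forall>t>t0. t \<notin> range tsw \<longrightarrow>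
            (q' i has_vector_derivative q'' i t) (at t)
            \<and> M i (q i t) *v q'' i t + C i (q i t) (q' i t) *v q' i t =
                C i (q i t) (q' i t) *v q' i t
                - k *\<^sub>R (M i (q i t) *v q' i t)
                - M i (q i t) *v (q i t - closest_point (X i) (q i t))
                - M i (q i t) *v (\<Sum>j\<in>neighbors (\<sigma> t) i. a i j t *\<^sub>R (q i t - q j t))))
     \<longrightarrow> (\<forall>i\<in>{1..n}. ((\<lambda>t. infdist (q i t) (\<Inter>l\<in>{1..n}. X l)) \<longlongrightarrow> 0) at_top)
       \<and> (\<forall>i\<in>{1..n}. \<forall>j\<in>{1..n}. ((\<lambda>t. q i t - q j t) \<longlongrightarrow> 0) at_top)
       \<and> (\<forall>i\<in>{1..n}. (q' i \<longlongrightarrow> 0) at_top)"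
proof -
  obtain x0 where x0: "x0 \<in> (\<Inter>i\<in>{1..n}. X i)" using X0_ne by blast
  define k0 where "k0 = 3 + real n * a_hi^2 / a_lo"
  have k0p: "k0 > 0" unfolding k0_def using a_pos by (simp add: add_pos_nonneg)
  show ?thesis
  proof (rule exI[of _ k0], rule conjI[OF k0p], intro allI impI)
    fix k :: real and q q' q'' :: "nat \<Rightarrow> real \<Rightarrow> real^'m"
    assume k: "k0 < k"
    assume H: "(\<forall>i\<in>{1..n}. \<forall>t\<ge>t0. (q i has_vector_derivative q' i t) (at t within {t0..}))
      \<and> (\<forall>i\<in>{1..n}. continuous_on {t0..} (q' i))
      \<and> (\<forall>i\<in>{1..n}. \<forall>t>t0. t \<notin> range tsw \<longrightarrow>
            (q' i has_vector_derivative q'' i t) (at t)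
            \<and> M i (q i t) *v q'' i t + C i (q i t) (q' i t) *v q' i t =
                C i (q i t) (q' i t) *v q' i t
                - k *\<^sub>R (M i (q i t) *v q' i t)
                - M i (q i t) *v (q i t - closest_point (X i) (q i t))
                - M i (q i t) *v (\<Sum>j\<in>neighbors (\<sigma> t) i. a i j t *\<^sub>R (q i t - q j t)))"
    have S: "sys n X \<sigma> t0 \<tau>d T a_lo a_hi k tsw a q q' q'' x0"
    proof (unfold_locales)
      show "\<And>i. i \<in> {1..n} \<Longrightarrow> closed (X i)" by (rule X_closed)
      show "\<And>i. i \<in> {1..n} \<Longrightarrow> convex (X i)" by (rule X_convex)
      show "\<And>i. i \<in> {1..n} \<Longrightarrow> x0 \<in> X i" using x0 by blast
      show "\<And>t. t0 \<le> t \<Longrightarrow> undirected_graph_on {1..n} (\<sigma> t)" using P_graphs \<sigma>_in by blast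
      show "\<tau>d > 0" by (rule \<tau>d_pos)
      show "tsw 0 = t0" by (rule tsw_0)
      show "\<And>l. \<tau>d \<le> tsw (Suc l) - tsw l" by (rule tsw_dwell)
      show "\<And>l t. tsw l \<le> t \<Longrightarrow> t < tsw (Suc l) \<Longrightarrow> \<sigma> t = \<sigma> (tsw l)" by (rule \<sigma>_pc)
      show "\<And>i j t. a i j t = a j i t" by (rule a_sym)
      show "\<And>i j t. i \<in> {1..n} \<Longrightarrow> j \<in> {1..n} \<Longrightarrow> 0 \<le> t \<Longrightarrow> a_lo \<le> a i j t \<and> a i j t \<le> a_hi"
        by (rule a_bounds)
      show "a_lo > 0" "a_hi > 0" by (rule a_pos(1), rule a_pos(2))
      show "T > 0" by (rule T_pos)
      show "\<And>t. t0 \<le> t \<Longrightarrow> graph_connected {1..n} (\<Union>s\<in>{t..<t+T}. \<sigma> s)" by (rule jointly_connected)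
      show "k > 3 + real n * a_hi^2 / a_lo" using k unfolding k0_def .
      show "\<And>i t. i \<in> {1..n} \<Longrightarrow> t0 \<le> t \<Longrightarrow> (q i has_vector_derivative q' i t) (at t within {t0..})"
        using H by blast
      show "\<And>i. i \<in> {1..n} \<Longrightarrow> continuous_on {t0..} (q' i)" using H by blast
      fix i t assume i: "i \<in> {1..n}" and t: "t0 < t" "t \<notin> range tsw"
      have h: "(q' i has_vector_derivative q'' i t) (at t)
            \<and> M i (q i t) *v q'' i t + C i (q i t) (q' i t) *v q' i t =
                C i (q i t) (q' i t) *v q' i t
                - k *\<^sub>R (M i (q i t) *v q' i t)
                - M i (q i t) *v (q i t - closest_point (X i) (q i t))
                - M i (q i t) *v (\<Sum>j\<in>neighbors (\<sigma> t) i. a i j t *\<^sub>R (q i t - q j t))"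
        using H i t by blast
      show "(q' i has_vector_derivative q'' i t) (at t) \<and>
        q'' i t = - (k *\<^sub>R q' i t) - (q i t - closest_point (X i) (q i t))
                  - (\<Sum>j\<in>neighbors (\<sigma> t) i. a i j t *\<^sub>R (q i t - q j t))"
        using h ode_red[OF M_spd[OF i]] by blast
    qed
    show "(\<forall>i\<in>{1..n}. ((\<lambda>t. infdist (q i t) (\<Inter>l\<in>{1..n}. X l)) \<longlongrightarrow> 0) at_top)
       \<and> (\<forall>i\<in>{1..n}. \<forall>j\<in>{1..n}. ((\<lambda>t. q i t - q j t) \<longlongrightarrow> 0) at_top)
       \<and> (\<forall>i\<in>{1..n}. (q' i \<longlongrightarrow> 0) at_top)"
      using sys.final_x[OF S] sys.final_c[OF S] sys.final_v[OF S] by blast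
  qed
qed


end
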